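(* Let $A,B\subseteq\mathbb{N}$ with $A\cap B=\emptyset$. Then $$\underline{\underline{d}}(A)+\underline{\underline{d}}(B)\le\underline{\underline{d}}(A\cup B)\le\underline{\underline{d}}(A)+\overline{\overline{d}}(B)\le\overline{\overline{d}}(A\cup B)\le\overline{\overline{d}}(A)+\overline{\overline{d}}(B).$$ If moreover $A\cup B\in\mathcal{D}$, then $d(A\cup B)=\underline{\underline{d}}(A)+\overline{\overline{d}}(B)$. If $A\in\mathcal{D}$ (and $A\cap B=\emptyset$), then $\overline{\overline{d}}(A\cup B)=d(A)+\overline{\overline{d}}(B)$.
   Context: $\mathbb{N}=\{1,2,3,\dots\}$. For $A\subseteq\mathbb{N}$ let $A(n)=|A\cap[1,n]|$. Let $\mathcal{D}$ be the collection of all $A\subseteq\mathbb{N}$ for which the asymptotic density $d(A)=\lim_{n\to\infty}\frac{A(n)}{n}$ exists. Define $\underline{\underline{d}}(A)=\sup\{d(B);\ B\subseteq A,\ B\in\mathcal{D}\}$ and $\overline{\overline{d}}(A)=\inf\{d(C);\ C\supseteq A,\ C\in\mathcal{D}\}$. *)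

theory Defs
  imports "HOL-Analysis.Analysis"
begin

text \<open>Subsets of the positive integers N = {1,2,3,...} are modelled as sets of nat
  contained in {1..}.\<close>

definition counting :: "nat set \<Rightarrow> nat \<Rightarrow> nat" where
  "counting A n = card (A \<inter> {1..n})"

definition has_density :: "nat set \<Rightarrow> real \<Rightarrow> bool" where
  "has_density A a \<longleftrightarrow> ((\<lambda>n. real (counting A n) / real n) \<longlonglongrightarrow> a)"

definition density_sets :: "nat set set" where
  "density_sets = {A. A \<subseteq> {1..} \<and> (\<exists>a. has_density A a)}"

definition density :: "nat set \<Rightarrow> real" where
  "density A = lim (\<lambda>n. real (counting A n) / real n)"

definition lower_ddens :: "nat set \<Rightarrow> real" where
  "lower_ddens A = Sup {density B | B. B \<subseteq> A \<and> B \<in> density_sets}"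

definition upper_ddens :: "nat set \<Rightarrow> real" where
  "upper_ddens A = Inf {density C | C. A \<subseteq> C \<and> C \<in> density_sets}"

end

theory Submission
  imports Defs
begin


lemma counting_Suc: "counting X (Suc n) = counting X n + (if Suc n \<in> X then 1 else 0)"
proof -
  have "X \<inter> {1..Suc n} = (if Suc n \<in> X then insert (Suc n) (X \<inter> {1..n}) else X \<inter> {1..n})"
    using atLeastAtMostSuc_conv[of 1 n] by auto
  then show ?thesis unfolding counting_def by (auto simp: card_insert_if)
qed

lemma counting_0[simp]: "counting X 0 = 0"
  unfolding counting_def by simp

lemma counting_empty[simp]: "counting {} n = 0"
  unfolding counting_def by simp

lemma counting_le: "counting X n \<le> n"
  proof -
  have "counting X n \<le> card {1..n}" unfolding counting_def by (intro card_mono) auto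
  then show ?thesis by simp
qed

lemma counting_mono_set: "X \<subseteq> Y \<Longrightarrow> counting X n \<le> counting Y n"
  unfolding counting_def by (intro card_mono) auto

lemma counting_mono: "m \<le> n \<Longrightarrow> counting X m \<le> counting X n"
  unfolding counting_def by (intro card_mono) auto

lemma counting_Un_Int: "counting (X \<union> Y) n + counting (X \<inter> Y) n = counting X n + counting Y n"
proof -
  have "card (X \<inter> {1..n}) + card (Y \<inter> {1..n}) = card ((X \<inter> {1..n}) \<union> (Y \<inter> {1..n})) + card ((X \<inter> {1..n}) \<inter> (Y \<inter> {1..n}))"
    by (rule card_Un_Int) auto
  moreover have "(X \<inter> {1..n}) \<union> (Y \<inter> {1..n}) = (X \<union> Y) \<inter> {1..n}" by auto
  moreover have "(X \<inter> {1..n}) \<inter> (Y \<inter> {1..n}) = (X \<inter> Y) \<inter> {1..n}" by auto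
  ultimately show ?thesis unfolding counting_def by simp
qed

lemma counting_disj: "X \<inter> Y = {} \<Longrightarrow> counting (X \<union> Y) n = counting X n + counting Y n"
  using counting_Un_Int[of X Y n] by simp

lemma counting_U: "counting {1..} n = n"
  unfolding counting_def by (simp add: Int_absorb1)

lemma density_eq: "has_density X a \<Longrightarrow> density X = a"
  unfolding has_density_def density_def by (rule limI)

lemma ds_has: "X \<in> density_sets \<Longrightarrow> has_density X (density X)"
  unfolding density_sets_def using density_eq by auto

lemma ds_sub: "X \<in> density_sets \<Longrightarrow> X \<subseteq> {1..}"
  unfolding density_sets_def by auto

lemma ds_diff:
  assumes "X \<in> density_sets" "Y \<in> density_sets" "Y \<subseteq> X"
  shows "X - Y \<in> density_sets \<and> density (X - Y) = density X - density Y"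
proof -
  have c: "real (counting (X - Y) n) / real n = real (counting X n) / real n - real (counting Y n) / real n" for n
  proof -
    have "counting X n = counting Y n + counting (X - Y) n"
      using counting_disj[of Y "X - Y" n] assms(3) by (simp add: Un_absorb1 Un_Diff_cancel)
    then have "real (counting (X - Y) n) = real (counting X n) - real (counting Y n)" by simp
    then show ?thesis by (simp add: diff_divide_distrib)
  qed
  have "has_density (X - Y) (density X - density Y)"
    unfolding has_density_def c
    using ds_has[OF assms(1)] ds_has[OF assms(2)] unfolding has_density_def
    by (intro tendsto_diff)
  then show ?thesis using density_eq ds_sub[OF assms(1)] unfolding density_sets_def by auto
qed

lemma ds_Un:
  assumes "X \<in> density_sets" "Y \<in> density_sets" "X \<inter> Y = {}"
  shows "X \<union> Y \<in> density_sets \<and> density (X \<union> Y) = density X + density Y"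
proof -
  have c: "real (counting (X \<union> Y) n) / real n = real (counting X n) / real n + real (counting Y n) / real n" for n
    using counting_disj[OF assms(3), of n] by (simp add: add_divide_distrib)
  have "has_density (X \<union> Y) (density X + density Y)"
    unfolding has_density_def c
    using ds_has[OF assms(1)] ds_has[OF assms(2)] unfolding has_density_def
    by (intro tendsto_add)
  then show ?thesis using density_eq ds_sub[OF assms(1)] ds_sub[OF assms(2)] unfolding density_sets_def by auto
qed

lemma ds_U: "{1..} \<in> density_sets \<and> density {1..} = 1"
proof -
  have "((\<lambda>n. 1::real) \<longlongrightarrow> 1) sequentially" by simp
  then have "has_density {1..} 1"
    unfolding has_density_def counting_U
    by (rule Lim_transform_eventually) (auto simp: eventually_sequentially intro!: exI[of _ 1])
  then show ?thesis using density_eq unfolding density_sets_def by auto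
qed

lemma ds_empty: "{} \<in> density_sets \<and> density {} = 0"
proof -
  have "has_density {} 0" unfolding has_density_def counting_def by simp
  then show ?thesis using density_eq unfolding density_sets_def by auto
qed

lemma ds_mono:
  assumes "X \<in> density_sets" "Y \<in> density_sets" "Y \<subseteq> X"
  shows "density Y \<le> density X"
proof (rule LIMSEQ_le)
  show "(\<lambda>n. real (counting Y n) / real n) \<longlonglongrightarrow> density Y"
    using ds_has[OF assms(2)] unfolding has_density_def .
  show "(\<lambda>n. real (counting X n) / real n) \<longlonglongrightarrow> density X"
    using ds_has[OF assms(1)] unfolding has_density_def .
  show "\<exists>N. \<forall>n\<ge>N. real (counting Y n) / real n \<le> real (counting X n) / real n"
    using counting_mono_set[OF assms(3)] by (auto intro!: divide_right_mono)
qed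

lemma ds_bounds:
  assumes "X \<in> density_sets" shows "0 \<le> density X" "density X \<le> 1"
  using ds_mono[OF assms ds_empty[THEN conjunct1]] ds_empty
    ds_mono[OF ds_U[THEN conjunct1] assms ds_sub[OF assms]] ds_U by auto

lemma lower_ge: "B \<subseteq> X \<Longrightarrow> B \<in> density_sets \<Longrightarrow> density B \<le> lower_ddens X"
  unfolding lower_ddens_def
proof (rule cSup_upper)
  show "bdd_above {Defs.density B |B. B \<subseteq> X \<and> B \<in> density_sets}"
    unfolding bdd_above_def using ds_bounds(2) by blast
qed auto

lemma lower_le: "(\<And>B. B \<subseteq> X \<Longrightarrow> B \<in> density_sets \<Longrightarrow> density B \<le> c) \<Longrightarrow> lower_ddens X \<le> c"
  unfolding lower_ddens_def
  by (rule cSup_least) (use ds_empty in auto)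

lemma upper_le: "X \<subseteq> C \<Longrightarrow> C \<in> density_sets \<Longrightarrow> upper_ddens X \<le> density C"
  unfolding upper_ddens_def
proof (rule cInf_lower)
  show "bdd_below {Defs.density C |C. X \<subseteq> C \<and> C \<in> density_sets}"
    unfolding bdd_below_def using ds_bounds(1) by blast
qed auto

lemma upper_ge: "X \<subseteq> {1..} \<Longrightarrow> (\<And>C. X \<subseteq> C \<Longrightarrow> C \<in> density_sets \<Longrightarrow> c \<le> density C) \<Longrightarrow> c \<le> upper_ddens X"
  unfolding upper_ddens_def
  by (rule cInf_greatest) (use ds_U in auto)



lemma small_o_lemma:
  fixes a g :: "nat \<Rightarrow> real"
  assumes a: "a \<longlonglongrightarrow> 0" and a0: "\<And>k. 0 \<le> a k"
    and g: "\<And>n. \<exists>m\<le>n. g n \<le> 1 + real n * a n + real m * a m" and g0: "\<And>n. 0 \<le> g n"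
  shows "(\<lambda>n. g n / real n) \<longlonglongrightarrow> 0"
proof (rule LIMSEQ_I)
  fix r :: real assume r: "0 < r"
  obtain N where N: "\<And>k. k \<ge> N \<Longrightarrow> a k < r/4"
    using LIMSEQ_D[OF a, of "r/4"] r a0 by force
  define K where "K = (\<Sum>k<N. real k * a k)"
  have K: "real m * a m \<le> r/4 * real m + K" for m
  proof (cases "m \<ge> N")
    case True
    then have "real m * a m \<le> real m * (r/4)" using N[OF True] by (intro mult_left_mono) auto
    moreover have "0 \<le> K" unfolding K_def using a0 by (intro sum_nonneg) auto
    moreover have "real m * (r/4) = r/4 * real m" by simp
    ultimately show ?thesis by linarith
  next
    case False
    then have "real m * a m \<le> K" unfolding K_def using a0
      by (intro member_le_sum) (auto simp: not_le)
    moreover have "0 \<le> r/4 * real m" using r by simp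
    ultimately show ?thesis by linarith
  qed
  define no where "no = max N (nat \<lceil>2 * (1 + K) / r\<rceil> + 1)"
  show "\<exists>no. \<forall>n\<ge>no. norm (g n / real n - 0) < r"
  proof (intro exI allI impI)
    fix n assume n: "no \<le> n"
    then have nN: "N \<le> n" unfolding no_def by simp
    have "real (nat \<lceil>2 * (1 + K) / r\<rceil> + 1) \<le> real n" using n unfolding no_def by linarith
    then have n1: "2 * (1 + K) / r < real n" by linarith
    have "0 \<le> K" using K[of 0] by simp
    then have "0 < 2 * (1 + K) / r" using r by simp
    then have npos: "0 < real n" using n1 by linarith
    obtain m where m: "m \<le> n" "g n \<le> 1 + real n * a n + real m * a m" using g by blast
    have "a n \<le> r/4" using N[OF nN] by simp
    then have "real n * a n \<le> real n * (r/4)" by (intro mult_left_mono) auto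
    then have "real n * a n \<le> r/4 * real n" by (simp add: mult.commute)
    moreover have "r/4 * real m \<le> r/4 * real n" using m(1) r by (intro mult_left_mono) auto
    then have "real m * a m \<le> r/4 * real n + K" using K[of m] by linarith
    ultimately have gn: "g n \<le> 1 + K + r/2 * real n" using m(2) by linarith
    have "2 * (1 + K) < r * real n" using n1 r by (simp add: field_simps)
    then have "1 + K + r/2 * real n < r * real n" by (simp add: field_simps)
    then have "g n < r * real n" using gn by (rule le_less_trans[rotated])
    then have "g n / real n < r" using npos by (simp add: field_simps)
    then show "norm (g n / real n - 0) < r" using g0[of n] npos by simp
  qed
qed



primrec trk :: "nat set \<Rightarrow> nat set \<Rightarrow> nat \<Rightarrow> nat" where
  "trk S I 0 = 0"
| "trk S I (Suc n) = trk S I n + (if Suc n \<notin> S \<and> trk S I n < counting I (Suc n) then 1 else 0)"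

lemma key_union:
  assumes C1: "C1 \<in> density_sets" and C2: "C2 \<in> density_sets"
  shows "\<exists>D\<in>density_sets. C1 \<union> C2 \<subseteq> D \<and> density D \<le> density C1 + density C2"
proof (cases "density C1 + density C2 \<ge> 1")
  case True
  show ?thesis
  proof (rule bexI[of _ "{1..}"])
    show "{1..} \<in> density_sets" using ds_U by blast
    show "C1 \<union> C2 \<subseteq> {1..} \<and> density {1..} \<le> density C1 + density C2"
      using ds_U ds_sub[OF C1] ds_sub[OF C2] True by auto
  qed
next
  case False
  define d1 where "d1 = density C1"
  define d2 where "d2 = density C2"
  define S where "S = C1 \<union> C2"
  define I where "I = C1 \<inter> C2"
  define e where "e = trk S I"
  define E where "E = {k. k \<ge> 1 \<and> k \<notin> S \<and> e (k - 1) < counting I k}"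
  have cE: "counting E n = e n" for n
  proof (induction n)
    case (Suc n)
    have "Suc n \<in> E \<longleftrightarrow> Suc n \<notin> S \<and> e n < counting I (Suc n)" unfolding E_def by simp
    then show ?case using Suc counting_Suc[of E n] unfolding e_def by simp
  qed (simp add: e_def)
  have e_le: "e n \<le> counting I n" for n
  proof (induction n)
    case (Suc n)
    then show ?case using counting_Suc[of I n] unfolding e_def by auto
  qed (simp add: e_def)
  define \<phi> where "\<phi> k = real (counting C1 k) + real (counting C2 k) - real k" for k
  have inv: "\<exists>m\<le>n. real (counting I n) - real (e n) \<le> \<phi> n - \<phi> m + 1" for n
  proof (induction n)
    case 0
    then show ?case by (auto simp: e_def)
  next
    case (Suc n)
    then obtain m where m: "m \<le> n" "real (counting I n) - real (e n) \<le> \<phi> n - \<phi> m + 1" by blast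
    have eS: "e (Suc n) = e n + (if Suc n \<notin> S \<and> e n < counting I (Suc n) then 1 else 0)"
      unfolding e_def by simp
    have phS: "\<phi> (Suc n) = \<phi> n + (if Suc n \<in> C1 then 1 else 0) + (if Suc n \<in> C2 then 1 else 0) - 1"
      unfolding \<phi>_def using counting_Suc[of C1 n] counting_Suc[of C2 n] by simp
    have iS: "counting I (Suc n) = counting I n + (if Suc n \<in> C1 \<and> Suc n \<in> C2 then 1 else 0)"
      using counting_Suc[of I n] unfolding I_def by simp
    show ?case
    proof (cases "e n = counting I n")
      case True
      then have "real (counting I (Suc n)) - real (e (Suc n)) \<le> \<phi> (Suc n) - \<phi> (Suc n) + 1"
        using eS iS by auto
      then show ?thesis by blast
    next
      case False
      then have lt: "e n < counting I n" using e_le[of n] by simp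
      have "real (counting I (Suc n)) - real (e (Suc n)) \<le> \<phi> (Suc n) - \<phi> m + 1"
      proof (cases "Suc n \<in> C1"; cases "Suc n \<in> C2")
        assume "Suc n \<in> C1" "Suc n \<in> C2"
        then show ?thesis using m(2) eS iS phS unfolding S_def by simp
      next
        assume "Suc n \<in> C1" "Suc n \<notin> C2"
        then show ?thesis using m(2) eS iS phS unfolding S_def by simp
      next
        assume "Suc n \<notin> C1" "Suc n \<in> C2"
        then show ?thesis using m(2) eS iS phS unfolding S_def by simp
      next
        assume "Suc n \<notin> C1" "Suc n \<notin> C2"
        then show ?thesis using m(2) eS iS phS lt unfolding S_def by simp
      qed
      then show ?thesis using m(1) le_SucI by blast
    qed
  qed
  define a where "a k = \<bar>real (counting C1 k) / real k - d1\<bar> + \<bar>real (counting C2 k) / real k - d2\<bar>" for k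
  have a0: "0 \<le> a k" for k unfolding a_def by simp
  have alim: "a \<longlonglongrightarrow> 0"
  proof -
    have "(\<lambda>k. \<bar>real (counting C1 k) / real k - d1\<bar> + \<bar>real (counting C2 k) / real k - d2\<bar>) \<longlonglongrightarrow> \<bar>d1 - d1\<bar> + \<bar>d2 - d2\<bar>"
      using ds_has[OF C1] ds_has[OF C2] unfolding has_density_def d1_def d2_def
      by (intro tendsto_intros)
    then show ?thesis unfolding a_def by simp
  qed
  define g where "g n = real (counting I n) - real (e n)" for n
  have g0: "0 \<le> g n" for n unfolding g_def using e_le[of n] by simp
  have h: "real (counting C k) - d * real k \<le> real k * \<bar>real (counting C k) / real k - d\<bar>" for C k d
  proof (cases "k = 0")
    case False
    then have "real (counting C k) - d * real k = real k * (real (counting C k) / real k - d)"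
      by (simp add: field_simps)
    moreover have "real k * (real (counting C k) / real k - d) \<le> real k * \<bar>real (counting C k) / real k - d\<bar>"
      by (intro mult_left_mono) auto
    ultimately show ?thesis by simp
  qed simp
  have h2: "- (real (counting C k) - d * real k) \<le> real k * \<bar>real (counting C k) / real k - d\<bar>" for C k d
  proof (cases "k = 0")
    case False
    then have "real (counting C k) - d * real k = real k * (real (counting C k) / real k - d)"
      by (simp add: field_simps)
    moreover have "real k * (- (real (counting C k) / real k - d)) \<le> real k * \<bar>real (counting C k) / real k - d\<bar>"
      by (intro mult_left_mono) auto
    ultimately show ?thesis by (simp add: algebra_simps)
  qed simp
  have gb: "\<exists>m\<le>n. g n \<le> 1 + real n * a n + real m * a m" for n
  proof -
    obtain m where m: "m \<le> n" "g n \<le> \<phi> n - \<phi> m + 1" using inv[of n] unfolding g_def by blast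
    have neg: "(d1 + d2 - 1) * (real n - real m) \<le> 0"
      using False m(1) unfolding d1_def d2_def by (intro mult_nonpos_nonneg) auto
    have "\<phi> n - \<phi> m = (real (counting C1 n) - d1 * real n) + (real (counting C2 n) - d2 * real n)
        - (real (counting C1 m) - d1 * real m) - (real (counting C2 m) - d2 * real m)
        + (d1 + d2 - 1) * (real n - real m)"
      unfolding \<phi>_def by (simp add: algebra_simps)
    also have "\<dots> \<le> real n * a n + real m * a m"
    proof -
      have an: "real k * a k = real k * \<bar>real (counting C1 k) / real k - d1\<bar> + real k * \<bar>real (counting C2 k) / real k - d2\<bar>" for k
        unfolding a_def by (rule distrib_left)
      show ?thesis
        using neg h[of C1 n d1] h[of C2 n d2] h2[of C1 m d1] h2[of C2 m d2] an[of n] an[of m]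
        by linarith
    qed
    finally have "g n \<le> 1 + real n * a n + real m * a m" using m(2) by linarith
    then show ?thesis using m(1) by blast
  qed
  have glim: "(\<lambda>n. g n / real n) \<longlonglongrightarrow> 0"
    by (rule small_o_lemma[OF alim a0 gb g0])
  define D where "D = S \<union> E"
  have SE: "S \<inter> E = {}" unfolding E_def by auto
  have cD: "real (counting D n) / real n = real (counting C1 n) / real n + real (counting C2 n) / real n - g n / real n" for n
  proof -
    have "counting D n = counting S n + e n" unfolding D_def using counting_disj[OF SE] cE by simp
    moreover have "counting S n + counting I n = counting C1 n + counting C2 n"
      unfolding S_def I_def by (rule counting_Un_Int)
    ultimately have "real (counting D n) = real (counting C1 n) + real (counting C2 n) - g n"
      unfolding g_def by linarith
    then show ?thesis by (simp add: add_divide_distrib diff_divide_distrib)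
  qed
  have l1: "(\<lambda>n. real (counting C1 n) / real n) \<longlonglongrightarrow> d1"
    using ds_has[OF C1] unfolding has_density_def d1_def .
  have l2: "(\<lambda>n. real (counting C2 n) / real n) \<longlonglongrightarrow> d2"
    using ds_has[OF C2] unfolding has_density_def d2_def .
  have "(\<lambda>n. real (counting C1 n) / real n + real (counting C2 n) / real n - g n / real n) \<longlonglongrightarrow> d1 + d2 - 0"
    by (rule tendsto_diff[OF tendsto_add[OF l1 l2] glim])
  then have hD: "has_density D (d1 + d2)"
    unfolding has_density_def cD by simp
  have "E \<subseteq> {1..}" unfolding E_def by auto
  then have Dsub: "D \<subseteq> {1..}" unfolding D_def S_def using ds_sub[OF C1] ds_sub[OF C2] by blast
  have Dds: "D \<in> density_sets" unfolding density_sets_def using Dsub hD by blast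
  have dD: "density D = density C1 + density C2" using density_eq[OF hD] unfolding d1_def d2_def .
  have "C1 \<union> C2 \<subseteq> D" unfolding D_def S_def by blast
  then show ?thesis using Dds dD by (intro bexI[of _ D]) auto
qed



lemma ds_lower: "X \<in> density_sets \<Longrightarrow> lower_ddens X = density X"
  using lower_ge[of X X] lower_le[of X "density X"] ds_mono[of X] by force

lemma ds_upper: "X \<in> density_sets \<Longrightarrow> upper_ddens X = density X"
  using upper_le[of X X] upper_ge[of X "density X"] ds_mono[of _ X] ds_sub[of X] by force

theorem proposition3p11:
  fixes A B :: "nat set"
  assumes "A \<subseteq> {1..}" and "B \<subseteq> {1..}" and "A \<inter> B = {}"
  shows "lower_ddens A + lower_ddens B \<le> lower_ddens (A \<union> B)
    \<and> lower_ddens (A \<union> B) \<le> lower_ddens A + upper_ddens B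
    \<and> lower_ddens A + upper_ddens B \<le> upper_ddens (A \<union> B)
    \<and> upper_ddens (A \<union> B) \<le> upper_ddens A + upper_ddens B
    \<and> (A \<union> B \<in> density_sets \<longrightarrow> density (A \<union> B) = lower_ddens A + upper_ddens B)
    \<and> (A \<in> density_sets \<longrightarrow> upper_ddens (A \<union> B) = density A + upper_ddens B)"
proof -
  have AB: "A \<union> B \<subseteq> {1..}" using assms by blast
  have i1: "lower_ddens A + lower_ddens B \<le> lower_ddens (A \<union> B)"
  proof -
    have "lower_ddens A \<le> lower_ddens (A \<union> B) - lower_ddens B"
    proof (rule lower_le)
      fix B1 assume B1: "B1 \<subseteq> A" "B1 \<in> density_sets"
      have "lower_ddens B \<le> lower_ddens (A \<union> B) - density B1"
      proof (rule lower_le)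
        fix B2 assume B2: "B2 \<subseteq> B" "B2 \<in> density_sets"
        have "B1 \<inter> B2 = {}" using B1 B2 assms(3) by blast
        then have "B1 \<union> B2 \<in> density_sets" "density (B1 \<union> B2) = density B1 + density B2"
          using ds_Un[OF B1(2) B2(2)] by auto
        moreover have "B1 \<union> B2 \<subseteq> A \<union> B" using B1 B2 by blast
        ultimately have "density B1 + density B2 \<le> lower_ddens (A \<union> B)"
          using lower_ge by metis
        then show "density B2 \<le> lower_ddens (A \<union> B) - density B1" by simp
      qed
      then show "density B1 \<le> lower_ddens (A \<union> B) - lower_ddens B" by simp
    qed
    then show ?thesis by simp
  qed
  have i3: "lower_ddens A + upper_ddens B \<le> upper_ddens (A \<union> B)"
  proof (rule upper_ge[OF AB])
    fix F assume F: "A \<union> B \<subseteq> F" "F \<in> density_sets"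
    have "lower_ddens A \<le> density F - upper_ddens B"
    proof (rule lower_le)
      fix E assume E: "E \<subseteq> A" "E \<in> density_sets"
      have "E \<subseteq> F" using E F by blast
      note d = ds_diff[OF F(2) E(2) this]
      have "B \<subseteq> F - E" using E F assms(3) by blast
      then have "upper_ddens B \<le> density (F - E)" using upper_le d by blast
      then show "density E \<le> density F - upper_ddens B" using d by simp
    qed
    then show "lower_ddens A + upper_ddens B \<le> density F" by simp
  qed
  have i4: "upper_ddens (A \<union> B) \<le> upper_ddens A + upper_ddens B"
  proof -
    have "upper_ddens (A \<union> B) - upper_ddens A \<le> upper_ddens B"
    proof (rule upper_ge[OF assms(2)])
      fix C2 assume C2: "B \<subseteq> C2" "C2 \<in> density_sets"
      have "upper_ddens (A \<union> B) - density C2 \<le> upper_ddens A"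
      proof (rule upper_ge[OF assms(1)])
        fix C1 assume C1: "A \<subseteq> C1" "C1 \<in> density_sets"
        obtain D where D: "D \<in> density_sets" "C1 \<union> C2 \<subseteq> D" "density D \<le> density C1 + density C2"
          using key_union[OF C1(2) C2(2)] by blast
        have "A \<union> B \<subseteq> D" using C1 C2 D by blast
        then have "upper_ddens (A \<union> B) \<le> density D" using upper_le D(1) by blast
        then show "upper_ddens (A \<union> B) - density C2 \<le> density C1" using D(3) by simp
      qed
      then show "upper_ddens (A \<union> B) - upper_ddens A \<le> density C2" by simp
    qed
    then show ?thesis by simp
  qed
  have i2: "lower_ddens (A \<union> B) \<le> lower_ddens A + upper_ddens B"
  proof -
    have "lower_ddens (A \<union> B) - lower_ddens A \<le> upper_ddens B"
    proof (rule upper_ge[OF assms(2)])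
      fix C assume C: "B \<subseteq> C" "C \<in> density_sets"
      have "lower_ddens (A \<union> B) \<le> lower_ddens A + density C"
      proof (rule lower_le)
        fix D assume D: "D \<subseteq> A \<union> B" "D \<in> density_sets"
        have "D \<subseteq> {1..}" using ds_sub[OF D(2)] .
        note cD = ds_diff[OF ds_U[THEN conjunct1] D(2) this]
        obtain G where G: "G \<in> density_sets" "({1..} - D) \<union> C \<subseteq> G" "density G \<le> density ({1..} - D) + density C"
          using key_union[OF cD[THEN conjunct1] C(2)] by blast
        have "G \<subseteq> {1..}" using ds_sub[OF G(1)] .
        note cG = ds_diff[OF ds_U[THEN conjunct1] G(1) this]
        have "{1..} - G \<subseteq> A" using G(2) D(1) C(1) by blast
        then have "density ({1..} - G) \<le> lower_ddens A" using lower_ge cG by blast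
        then show "density D \<le> lower_ddens A + density C"
          using cG cD G(3) ds_U by simp
      qed
      then show "lower_ddens (A \<union> B) - lower_ddens A \<le> density C" by simp
    qed
    then show ?thesis by simp
  qed
  have i5: "A \<union> B \<in> density_sets \<longrightarrow> density (A \<union> B) = lower_ddens A + upper_ddens B"
    using i2 i3 ds_lower[of "A \<union> B"] ds_upper[of "A \<union> B"] by auto
  have i6: "A \<in> density_sets \<longrightarrow> upper_ddens (A \<union> B) = density A + upper_ddens B"
    using i3 i4 ds_lower[of A] ds_upper[of A] by auto
  show ?thesis using i1 i2 i3 i4 i5 i6 by blast
qed

end
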